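(* Fix an integer $t\ge1$ and $\delta\in[0,1)$. For every finite binary input sequence $x$ and all binary sequences $y^1,\dots,y^t$, $$\Pr(Y^1=y^1,\dots,Y^t=y^t\mid X=x)=\Pr(\tilde Y^1=y^1,\dots,\tilde Y^t=y^t\mid X=x),$$ where $(Y^1,\dots,Y^t)$ are the outputs of the $t$-trace deletion channel on input $X$, and $(\tilde Y^1,\dots,\tilde Y^t)$ are the outputs of the cascade in which $X$ is first passed through a deletion channel with deletion probability $\delta^t$, producing $Z$, and then $Z$ is passed through the remnant channel with parameter $\delta$ (with $t$ outputs).
   Context: A deletion channel with deletion probability $q$ deletes each input symbol independently with probability $q$ and outputs the subsequence of undeleted symbols. The $t$-trace deletion channel passes the same input $X$ through $t$ independent deletion channels each with deletion probability $\delta$, giving outputs $Y^1,\dots,Y^t$. The remnant channel with parameter $\delta$ and $t$ outputs acts independently on each input symbol: for each nonempty subset $S\subseteq\{1,\dots,t\}$, with probability $\frac{\delta^{t-|S|}(1-\delta)^{|S|}}{1-\delta^t}$ the symbol is kept (in order) in exactly the outputs indexed by $S$ and deleted from the others; its outputs are $\tilde Y^1,\dots,\tilde Y^t$. In the cascade, the remnant channel acts independently of the first deletion channel given its input. *)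

theory Defs
  imports "HOL-Probability.Probability"
begin

fun del_chan :: "real \<Rightarrow> 'a list \<Rightarrow> 'a list pmf" where
  "del_chan q [] = return_pmf []"
| "del_chan q (x # xs) =
     bind_pmf (bernoulli_pmf (1 - q)) (\<lambda>keep.
     bind_pmf (del_chan q xs) (\<lambda>ys.
     return_pmf (if keep then x # ys else ys)))"

fun trace_chan :: "real \<Rightarrow> nat \<Rightarrow> 'a list \<Rightarrow> 'a list list pmf" where
  "trace_chan d 0 x = return_pmf []"
| "trace_chan d (Suc t) x =
     bind_pmf (del_chan d x) (\<lambda>y.
     bind_pmf (trace_chan d t x) (\<lambda>ys. return_pmf (y # ys)))"

text \<open>Per-symbol law of the remnant channel: the nonempty set S of outputs (indices
0..t-1) in which the symbol is kept, with probability
delta^(t-|S|) (1-delta)^|S| / (1 - delta^t).\<close>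
definition remnant_set_pmf :: "real \<Rightarrow> nat \<Rightarrow> nat set pmf" where
  "remnant_set_pmf d t = embed_pmf (\<lambda>S.
     if S \<subseteq> {..<t} \<and> S \<noteq> {}
     then d ^ (t - card S) * (1 - d) ^ card S / (1 - d ^ t) else 0)"

fun remnant_chan :: "real \<Rightarrow> nat \<Rightarrow> 'a list \<Rightarrow> 'a list list pmf" where
  "remnant_chan d t [] = return_pmf (replicate t [])"
| "remnant_chan d t (x # xs) =
     bind_pmf (remnant_set_pmf d t) (\<lambda>S.
     bind_pmf (remnant_chan d t xs) (\<lambda>ys.
     return_pmf (map (\<lambda>i. if i \<in> S then x # ys ! i else ys ! i) [0..<t])))"

definition cascade_chan :: "real \<Rightarrow> nat \<Rightarrow> 'a list \<Rightarrow> 'a list list pmf" where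
  "cascade_chan d t x = bind_pmf (del_chan (d ^ t) x) (remnant_chan d t)"

end

theory Submission imports Defs begin

fun gen_chan :: "nat set pmf \<Rightarrow> nat \<Rightarrow> 'a list \<Rightarrow> 'a list list pmf" where
  "gen_chan P t [] = return_pmf (replicate t [])"
| "gen_chan P t (x # xs) =
     bind_pmf P (\<lambda>S. bind_pmf (gen_chan P t xs) (\<lambda>ys.
     return_pmf (map (\<lambda>i. if i \<in> S then x # ys ! i else ys ! i) [0..<t])))"

lemma remnant_gen: "remnant_chan d t x = gen_chan (remnant_set_pmf d t) t x"
  by (induction x) auto

lemma gen_len: "ys \<in> set_pmf (gen_chan P t x) \<Longrightarrow> length ys = t"
  by (induction x arbitrary: ys) auto

definition mix :: "real \<Rightarrow> nat set pmf \<Rightarrow> nat set pmf" where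
  "mix q P = bind_pmf (bernoulli_pmf (1 - q)) (\<lambda>k. if k then P else return_pmf {})"

lemma bind_mix: "bind_pmf (mix q P) f = bind_pmf (bernoulli_pmf (1 - q)) (\<lambda>k. if k then bind_pmf P f else f {})"
  unfolding mix_def by (simp add: bind_assoc_pmf, intro bind_pmf_cong refl, simp add: bind_return_pmf)

lemma cascade_gen: "bind_pmf (del_chan q x) (gen_chan P t) = gen_chan (mix q P) t x"
proof (induction x)
  case Nil
  then show ?case by (simp add: bind_return_pmf)
next
  case (Cons a xs)
  have mapid: "map (\<lambda>i. if i \<in> {} then a # ys ! i else ys ! i) [0..<t] = ys"
    if "ys \<in> set_pmf (gen_chan (mix q P) t xs)" for ys
    using gen_len[OF that] map_nth[of ys] by simp
  have mapid2: "gen_chan (mix q P) t xs = bind_pmf (gen_chan (mix q P) t xs) (\<lambda>ys. return_pmf (map ((!) ys) [0..<t]))"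
    by (subst bind_pmf_cong[OF refl, where g=return_pmf]) (use mapid in \<open>auto simp: bind_return_pmf'\<close>)
  have "bind_pmf (del_chan q (a # xs)) (gen_chan P t)
     = bind_pmf (bernoulli_pmf (1 - q)) (\<lambda>k. bind_pmf (del_chan q xs) (\<lambda>zs.
         if k then gen_chan P t (a # zs) else gen_chan P t zs))"
    by (simp add: bind_assoc_pmf, intro bind_pmf_cong refl, simp add: bind_return_pmf)
  also have "\<dots> = bind_pmf (bernoulli_pmf (1 - q)) (\<lambda>k. if k then
        bind_pmf P (\<lambda>S. bind_pmf (gen_chan (mix q P) t xs) (\<lambda>ys.
         return_pmf (map (\<lambda>i. if i \<in> S then a # ys ! i else ys ! i) [0..<t])))
      else gen_chan (mix q P) t xs)"
  proof (intro bind_pmf_cong refl)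
    fix k :: bool
    show "bind_pmf (del_chan q xs) (\<lambda>zs. if k then gen_chan P t (a # zs) else gen_chan P t zs) =
      (if k then
        bind_pmf P (\<lambda>S. bind_pmf (gen_chan (mix q P) t xs) (\<lambda>ys.
         return_pmf (map (\<lambda>i. if i \<in> S then a # ys ! i else ys ! i) [0..<t])))
      else gen_chan (mix q P) t xs)"
    proof (cases k)
      case True
      then show ?thesis
        by (simp add: Cons.IH[symmetric] bind_assoc_pmf)
           (subst bind_commute_pmf, rule refl)
    next
      case False
      then show ?thesis by (simp add: Cons.IH)
    qed
  qed
  also have "\<dots> = gen_chan (mix q P) t (a # xs)"
    apply (simp add: bind_mix)
    apply (intro bind_pmf_cong refl)
    apply (auto simp: bind_return_pmf mapid2[symmetric] cong: bind_pmf_cong)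
    done
  finally show ?case .
qed

fun pset :: "real \<Rightarrow> nat \<Rightarrow> nat set pmf" where
  "pset d 0 = return_pmf {}"
| "pset d (Suc t) = bind_pmf (bernoulli_pmf (1 - d)) (\<lambda>k.
     map_pmf (\<lambda>S. if k then insert 0 (Suc ` S) else Suc ` S) (pset d t))"

lemma trace_nil: "trace_chan d t [] = return_pmf (replicate t [])"
  by (induction t) (auto simp: bind_return_pmf)

lemma upt_Suc_shift: "[0..<Suc t] = 0 # map Suc [0..<t]"
  by (simp add: map_Suc_upt upt_conv_Cons)

lemma trace_cons: "trace_chan d t (a # xs) = bind_pmf (pset d t) (\<lambda>S.
   bind_pmf (trace_chan d t xs) (\<lambda>ys.
   return_pmf (map (\<lambda>i. if i \<in> S then a # ys ! i else ys ! i) [0..<t])))"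
proof (induction t)
  case 0
  then show ?case by (simp add: bind_return_pmf)
next
  case (Suc t)
  show ?case
    apply (simp add: Suc.IH bind_assoc_pmf bind_return_pmf map_pmf_def upt_Suc_shift del: upt_Suc)
    apply (intro bind_pmf_cong refl)
    apply (subst bind_commute_pmf)
    apply (intro bind_pmf_cong refl)
    apply (auto simp: image_iff)
    done
qed

lemma trace_gen: "trace_chan d t x = gen_chan (pset d t) t x"
  by (induction x) (auto simp: trace_nil trace_cons)

lemma inj_f1: "inj (\<lambda>S. insert (0::nat) (Suc ` S))"
proof (rule injI)
  fix A B :: "nat set" assume h: "insert 0 (Suc ` A) = insert 0 (Suc ` B)"
  have "\<And>x. x \<in> A \<longleftrightarrow> Suc x \<in> insert 0 (Suc ` A)" by auto
  moreover have "\<And>x. x \<in> B \<longleftrightarrow> Suc x \<in> insert 0 (Suc ` B)" by auto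
  ultimately show "A = B" using h by blast
qed

lemma inj_f2: "inj (\<lambda>S. (Suc ` S))"
  by (simp add: inj_image_eq_iff inj_def)

lemma S_decomp: "S = (if 0 \<in> S then insert 0 (Suc ` {i. Suc i \<in> S}) else Suc ` {i. Suc i \<in> S})"
  by (auto simp: image_iff) (metis not0_implies_Suc)+

lemma sub_iff: "(insert 0 (Suc ` A) \<subseteq> {..<Suc t}) = (A \<subseteq> {..<t})" "(Suc ` A \<subseteq> {..<Suc t}) = (A \<subseteq> {..<t})"
  by auto

lemma pset_pmf:
  assumes "0 \<le> d" "d \<le> 1"
  shows "pmf (pset d t) S = (if S \<subseteq> {..<t} then (1 - d) ^ card S * d ^ (t - card S) else 0)"
proof (induction t arbitrary: S)
  case 0
  then show ?case by (auto simp: pmf_return)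
next
  case (Suc t)
  define S0 where "S0 = {i. Suc i \<in> S}"
  have e: "pmf (pset d (Suc t)) S =
     (1 - d) * pmf (map_pmf (\<lambda>S. insert 0 (Suc ` S)) (pset d t)) S
     + d * pmf (map_pmf (\<lambda>S. Suc ` S) (pset d t)) S"
    using assms by (simp add: pmf_bind mult.commute)
  show ?case
  proof (cases "0 \<in> S")
    case True
    then have SS: "S = insert 0 (Suc ` S0)" using S_decomp[of S] by (simp add: S0_def)
    have a: "pmf (map_pmf (\<lambda>S. insert 0 (Suc ` S)) (pset d t)) S = pmf (pset d t) S0"
      unfolding SS by (rule pmf_map_inj'[OF inj_f1])
    have b: "pmf (map_pmf (\<lambda>S. Suc ` S) (pset d t)) S = 0"
      by (rule pmf_map_outside) (use True in auto)
    show ?thesis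
    proof (cases "S0 \<subseteq> {..<t}")
      case True
      then have fin: "finite S0" using finite_subset by blast
      have c: "card S = Suc (card S0)" unfolding SS using fin
        by (simp add: card_image image_iff)
      show ?thesis using True fin unfolding e a b Suc.IH c
        by (subst SS, simp only: sub_iff) simp
    next
      case False
      then show ?thesis unfolding e a b Suc.IH by (subst SS, simp only: sub_iff) simp
    qed
  next
    case False
    then have SS: "S = Suc ` S0" using S_decomp[of S] by (simp add: S0_def)
    have a: "pmf (map_pmf (\<lambda>S. Suc ` S) (pset d t)) S = pmf (pset d t) S0"
      unfolding SS by (rule pmf_map_inj'[OF inj_f2])
    have b: "pmf (map_pmf (\<lambda>S. insert 0 (Suc ` S)) (pset d t)) S = 0"
      by (rule pmf_map_outside) (use False in auto)
    show ?thesis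
    proof (cases "S0 \<subseteq> {..<t}")
      case True
      then have fin: "finite S0" using finite_subset by blast
      have c: "card S = card S0" unfolding SS using fin
        by (simp add: card_image)
      have le: "card S0 \<le> t" using True card_mono[OF _ True] by simp
      show ?thesis using True fin le unfolding e a b Suc.IH c
        by (subst SS, simp only: sub_iff) (simp add: Suc_diff_le)
    next
      case False
      then show ?thesis unfolding e a b Suc.IH by (subst SS, simp only: sub_iff) simp
    qed
  qed
qed

lemma remnant_pmf:
  assumes "t \<ge> 1" "0 \<le> d" "d < 1"
  shows "pmf (remnant_set_pmf d t) S = (if S \<subseteq> {..<t} \<and> S \<noteq> {}
     then d ^ (t - card S) * (1 - d) ^ card S / (1 - d ^ t) else 0)"
proof -
  let ?f = "\<lambda>S. if S \<subseteq> {..<t} \<and> S \<noteq> {}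
     then d ^ (t - card S) * (1 - d) ^ card S / (1 - d ^ t) else 0"
  have dt: "d ^ t < 1" using assms by (simp add: power_less_one_iff)
  have dt0: "0 \<le> d ^ t" using assms by simp
  have nn: "\<And>S. 0 \<le> ?f S" using assms dt by auto
  have fe: "?f S = (if S \<in> Pow {..<t} - {{}} then pmf (pset d t) S / (1 - d ^ t) else 0)" for S
    using assms by (auto simp: pset_pmf)
  have "(\<integral>\<^sup>+S. ennreal (?f S) \<partial>count_space UNIV) = (\<Sum>S\<in>Pow {..<t}. ennreal (?f S))"
    by (rule nn_integral_count_space') auto
  also have "\<dots> = ennreal (\<Sum>S\<in>Pow {..<t}. ?f S)"
    by (intro sum_ennreal nn)
  also have "(\<Sum>S\<in>Pow {..<t}. ?f S) = (\<Sum>S\<in>Pow {..<t} - {{}}. pmf (pset d t) S / (1 - d ^ t))"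
    unfolding fe by (rule sum.mono_neutral_cong_right) auto
  also have "\<dots> = (\<Sum>S\<in>Pow {..<t} - {{}}. pmf (pset d t) S) / (1 - d ^ t)"
    by (simp add: sum_divide_distrib)
  also have "(\<Sum>S\<in>Pow {..<t} - {{}}. pmf (pset d t) S) = (\<Sum>S\<in>Pow {..<t}. pmf (pset d t) S) - pmf (pset d t) {}"
    by (subst sum_diff1) auto
  also have "(\<Sum>S\<in>Pow {..<t}. pmf (pset d t) S) = 1"
  proof (rule sum_pmf_eq_1)
    show "set_pmf (pset d t) \<subseteq> Pow {..<t}"
      using assms by (auto simp: set_pmf_eq pset_pmf split: if_splits)
  qed auto
  also have "pmf (pset d t) {} = d ^ t" using assms by (simp add: pset_pmf)
  finally have "(\<integral>\<^sup>+S. ennreal (?f S) \<partial>count_space UNIV) = 1" using dt by simp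
  then show ?thesis unfolding remnant_set_pmf_def
    by (subst pmf_embed_pmf) (use nn in auto)
qed

lemma pset_mix:
  assumes "t \<ge> 1" "0 \<le> d" "d < 1"
  shows "pset d t = mix (d ^ t) (remnant_set_pmf d t)"
proof (rule pmf_eqI)
  fix S
  have dt: "d ^ t < 1" using assms by (simp add: power_less_one_iff)
  have dt0: "0 \<le> d ^ t" using assms by simp
  have "pmf (mix (d ^ t) (remnant_set_pmf d t)) S
     = pmf (remnant_set_pmf d t) S * (1 - d ^ t) + pmf (return_pmf {}) S * d ^ t"
    unfolding mix_def using dt dt0 by (simp add: pmf_bind)
  also have "\<dots> = pmf (pset d t) S"
    using assms dt by (auto simp: remnant_pmf pset_pmf pmf_return mult.commute)
  finally show "pmf (pset d t) S = pmf (mix (d ^ t) (remnant_set_pmf d t)) S" ..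
qed

theorem theorem3:
  fixes t :: nat and \<delta> :: real and x :: "bool list" and ys :: "bool list list"
  assumes "t \<ge> 1" and "0 \<le> \<delta>" and "\<delta> < 1" and "length ys = t"
  shows "pmf (trace_chan \<delta> t x) ys = pmf (cascade_chan \<delta> t x) ys"
proof -
  have "trace_chan \<delta> t x = cascade_chan \<delta> t x"
    unfolding cascade_chan_def trace_gen
    using cascade_gen[of "\<delta> ^ t" x "remnant_set_pmf \<delta> t" t] pset_mix[OF assms(1-3)]
    by (simp add: remnant_gen[abs_def])
  then show ?thesis by simp
qed

end
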